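(* Let $k\in\mathbb{N}$ with $k\ge2$, let $t_0\ge0$, and let $g_0\in C^2([t_0,\infty))$ satisfy $$\lim_{t\to\infty}tg_0'(t)=\infty,\qquad \lim_{t\to\infty}\frac{g_0''(t)}{g_0'(t)^2}=0,$$ and suppose $tg_0'(t)$ is nondecreasing and $g_0'(t)/g_0(t)$ is nonincreasing for all $t\ge t_0$. Let $f:[0,\infty)\to[0,\infty)$ be continuously differentiable with $f(t)=\exp_k(g_0(t))$ for all large $t$. Then $f$ satisfies condition (H1) of the context with $q=1$ (with $t_0$ replaced by a suitably large number).
   Context: $\exp_1=\exp$ and $\exp_k(t)=\exp_{k-1}(\exp(t))$. For $f$ positive and $C^2$ on $[t_0,\infty)$ with $g=\log f$ there, condition (H1) means: (i) $g'(t)>0$ and $g''(t)>0$ for all $t\ge t_0$, and there is a pair $(q,p)$ with either $q=1$ and $p\in(0,\infty]$, or $q\in(1,\infty)$ and $p\in(0,\infty)$, such that $\lim_{t\to\infty}\frac{g'(t)^2}{g(t)g''(t)}=q$ and $\lim_{t\to\infty}\frac{tg'(t)}{g(t)}=p$; (ii) if $q=1$, then $tg'(t)/g(t)$ is nondecreasing on $[t_0,\infty)$ and there exist $m\in\mathbb{N}$ and $\hat g\in C^2([t_0,\infty))$ with $f=\exp_m\circ\hat g$ and $\hat g'/\hat g$ nonincreasing on $[t_0,\infty)$. *)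

theory Defs
  imports "HOL-Analysis.Analysis"
begin

definition iter_exp :: "nat \<Rightarrow> real \<Rightarrow> real" where
  "iter_exp k = exp ^^ k"

definition C2_derivs :: "real set \<Rightarrow> (real \<Rightarrow> real) \<Rightarrow> (real \<Rightarrow> real) \<Rightarrow> (real \<Rightarrow> real) \<Rightarrow> bool" where
  "C2_derivs S h h1 h2 \<longleftrightarrow>
     (\<forall>x\<in>S. (h has_real_derivative h1 x) (at x within S) \<and>
             (h1 has_real_derivative h2 x) (at x within S)) \<and>
     continuous_on S h2"

definition H1 :: "(real \<Rightarrow> real) \<Rightarrow> real \<Rightarrow> real \<Rightarrow> ereal \<Rightarrow> bool" where
  "H1 f t0 q p \<longleftrightarrow>
     (\<forall>t\<ge>t0. f t > 0) \<and>
     (\<exists>f1 f2. C2_derivs {t0..} f f1 f2) \<and>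
     (\<exists>g1 g2. C2_derivs {t0..} (\<lambda>t. ln (f t)) g1 g2 \<and>
        (\<forall>t\<ge>t0. g1 t > 0 \<and> g2 t > 0) \<and>
        ((q = 1 \<and> 0 < p) \<or> (q > 1 \<and> 0 < p \<and> p < \<infinity>)) \<and>
        ((\<lambda>t. (g1 t)\<^sup>2 / (ln (f t) * g2 t)) \<longlongrightarrow> q) at_top \<and>
        ((\<lambda>t. ereal (t * g1 t / ln (f t))) \<longlongrightarrow> p) at_top \<and>
        (q = 1 \<longrightarrow>
           (\<forall>s t. t0 \<le> s \<and> s \<le> t \<longrightarrow> s * g1 s / ln (f s) \<le> t * g1 t / ln (f t)) \<and>
           (\<exists>m::nat. m \<ge> 1 \<and>
              (\<exists>h h1 h2. C2_derivs {t0..} h h1 h2 \<and>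
                 (\<forall>t\<ge>t0. f t = iter_exp m (h t)) \<and>
                 (\<forall>s t. t0 \<le> s \<and> s \<le> t \<longrightarrow> h1 t / h t \<le> h1 s / h s)))))"

end

theory Submission
  imports Defs
begin

lemma C2_transform:
  assumes "\<forall>x\<in>S. f x = g x" "C2_derivs S f f1 f2"
  shows "C2_derivs S g f1 f2"
  using assms unfolding C2_derivs_def has_field_derivative_def
  by (metis has_derivative_transform)

lemma C2_subset:
  assumes "T \<subseteq> S" "C2_derivs S f f1 f2"
  shows "C2_derivs T f f1 f2"
  using assms unfolding C2_derivs_def
  by (meson DERIV_subset continuous_on_subset subsetD)

lemma C2_cont:
  assumes "C2_derivs S f f1 f2"
  shows "continuous_on S f" "continuous_on S f1"
  using assms unfolding C2_derivs_def continuous_on_eq_continuous_within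
  by (auto intro: DERIV_continuous)

definition PP :: "real \<Rightarrow> (real\<Rightarrow>real) \<Rightarrow> (real\<Rightarrow>real) \<Rightarrow> (real\<Rightarrow>real) \<Rightarrow> bool" where
 "PP T u u1 u2 \<longleftrightarrow> C2_derivs {T..} u u1 u2 \<and> (\<forall>t\<ge>T. u1 t > 0 \<and> u t > 0) \<and>
   (\<forall>s t. T \<le> s \<and> s \<le> t \<longrightarrow> u s \<le> u t) \<and> filterlim u at_top at_top \<and>
   filterlim (\<lambda>t. t * u1 t) at_top at_top \<and> ((\<lambda>t. u2 t / (u1 t)\<^sup>2) \<longlongrightarrow> 0) at_top \<and>
   (\<forall>s t. T \<le> s \<and> s \<le> t \<longrightarrow> s * u1 s \<le> t * u1 t)"

lemma step:
  assumes P: "PP T u u1 u2" and T: "T > 0"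
  shows "PP T (\<lambda>t. exp (u t)) (\<lambda>t. exp (u t) * u1 t) (\<lambda>t. exp (u t) * ((u1 t)\<^sup>2 + u2 t))"
proof -
  have C2: "C2_derivs {T..} u u1 u2" and pos: "\<forall>t\<ge>T. u1 t > 0 \<and> u t > 0"
    and mono: "\<forall>s t. T \<le> s \<and> s \<le> t \<longrightarrow> u s \<le> u t" and lim: "filterlim u at_top at_top"
    and tl: "filterlim (\<lambda>t. t * u1 t) at_top at_top" and Q: "((\<lambda>t. u2 t / (u1 t)\<^sup>2) \<longlongrightarrow> 0) at_top"
    and tm: "\<forall>s t. T \<le> s \<and> s \<le> t \<longrightarrow> s * u1 s \<le> t * u1 t"
    using P unfolding PP_def by auto
  have d1: "(u has_real_derivative u1 x) (at x within {T..})"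
    and d2: "(u1 has_real_derivative u2 x) (at x within {T..})" if "x \<ge> T" for x
    using C2 that unfolding C2_derivs_def by auto
  have c: "continuous_on {T..} u" "continuous_on {T..} u1" "continuous_on {T..} u2"
    using C2_cont[OF C2] C2 unfolding C2_derivs_def by auto
  have "C2_derivs {T..} (\<lambda>t. exp (u t)) (\<lambda>t. exp (u t) * u1 t) (\<lambda>t. exp (u t) * ((u1 t)\<^sup>2 + u2 t))"
    unfolding C2_derivs_def
  proof (intro conjI ballI)
    fix x :: real assume "x \<in> {T..}"
    then have x: "x \<ge> T" by auto
    show "((\<lambda>t. exp (u t)) has_real_derivative exp (u x) * u1 x) (at x within {T..})"
      using d1[OF x] by (auto intro!: derivative_eq_intros)
    show "((\<lambda>t. exp (u t) * u1 t) has_real_derivative exp (u x) * ((u1 x)\<^sup>2 + u2 x)) (at x within {T..})"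
      using d1[OF x] d2[OF x] by (auto intro!: derivative_eq_intros simp: power2_eq_square algebra_simps)
  next
    show "continuous_on {T..} (\<lambda>t. exp (u t) * ((u1 t)\<^sup>2 + u2 t))"
      using c by (intro continuous_intros) auto
  qed
  moreover have "\<forall>t\<ge>T. exp (u t) * u1 t > 0 \<and> exp (u t) > 0" using pos by auto
  moreover have "\<forall>s t. T \<le> s \<and> s \<le> t \<longrightarrow> exp (u s) \<le> exp (u t)" using mono by auto
  moreover have "filterlim (\<lambda>t. exp (u t)) at_top at_top"
    using filterlim_compose[OF exp_at_top lim] by simp
  moreover have "filterlim (\<lambda>t. t * (exp (u t) * u1 t)) at_top at_top"
  proof (rule filterlim_at_top_mono[OF tl])
    have "eventually (\<lambda>t. u t \<ge> 0 \<and> t \<ge> T) at_top"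
      using eventually_conj[OF filterlim_at_top[THEN iffD1, OF lim, rule_format, of 0] eventually_ge_at_top[of T]] by simp
    then show "eventually (\<lambda>t. t * u1 t \<le> t * (exp (u t) * u1 t)) at_top"
    proof (rule eventually_mono)
      fix t assume t: "u t \<ge> 0 \<and> t \<ge> T"
      then have "1 \<le> exp (u t)" by auto
      moreover have "0 \<le> t * u1 t" using t pos T by auto
      ultimately have "1 * (t * u1 t) \<le> exp (u t) * (t * u1 t)" by (rule mult_right_mono)
      then show "t * u1 t \<le> t * (exp (u t) * u1 t)" by (simp add: algebra_simps)
    qed
  qed
  moreover have "((\<lambda>t. exp (u t) * ((u1 t)\<^sup>2 + u2 t) / (exp (u t) * u1 t)\<^sup>2) \<longlongrightarrow> 0) at_top"
  proof -
    have "((\<lambda>t. (1 + u2 t / (u1 t)\<^sup>2) * inverse (exp (u t))) \<longlongrightarrow> (1 + 0) * 0) at_top"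
      using Q filterlim_compose[OF exp_at_top lim]
      by (intro tendsto_intros tendsto_inverse_0_at_top) auto
    moreover have "eventually (\<lambda>t. (1 + u2 t / (u1 t)\<^sup>2) * inverse (exp (u t)) =
        exp (u t) * ((u1 t)\<^sup>2 + u2 t) / (exp (u t) * u1 t)\<^sup>2) at_top"
      using eventually_ge_at_top[of T]
    proof (rule eventually_mono)
      fix t assume "T \<le> t"
      then have "u1 t > 0" using pos by auto
      then show "(1 + u2 t / (u1 t)\<^sup>2) * inverse (exp (u t)) =
        exp (u t) * ((u1 t)\<^sup>2 + u2 t) / (exp (u t) * u1 t)\<^sup>2"
        by (simp add: field_simps power2_eq_square exp_minus)
    qed
    ultimately show ?thesis using tendsto_cong by fastforce
  qed
  moreover have "\<forall>s t. T \<le> s \<and> s \<le> t \<longrightarrow> s * (exp (u s) * u1 s) \<le> t * (exp (u t) * u1 t)"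
  proof (intro allI impI)
    fix s t assume st: "T \<le> s \<and> s \<le> t"
    have "exp (u s) * (s * u1 s) \<le> exp (u t) * (t * u1 t)"
    proof (rule mult_mono)
      show "exp (u s) \<le> exp (u t)" using st mono by auto
      show "s * u1 s \<le> t * u1 t" using st tm by blast
      show "0 \<le> exp (u t)" by simp
      show "0 \<le> s * u1 s" using st pos T by auto
    qed
    then show "s * (exp (u s) * u1 s) \<le> t * (exp (u t) * u1 t)" by (simp add: algebra_simps)
  qed
  ultimately show ?thesis unfolding PP_def by blast
qed

lemma PP_mono:
  assumes "PP T1 u u1 u2" "T1 \<le> T"
  shows "PP T u u1 u2"
proof -
  have "C2_derivs {T..} u u1 u2"
    using assms C2_subset[of "{T..}" "{T1..}"] unfolding PP_def by auto
  then show ?thesis using assms unfolding PP_def by auto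
qed

lemma iter_exp_Suc: "iter_exp (Suc n) x = exp (iter_exp n x)"
  by (simp add: iter_exp_def)

lemma iterate:
  assumes "PP T u u1 u2" "T > 0"
  shows "\<exists>v1 v2. PP T (\<lambda>t. iter_exp n (u t)) v1 v2"
proof (induction n)
  case 0
  then show ?case using assms by (auto simp: iter_exp_def)
next
  case (Suc n)
  then obtain v1 v2 where "PP T (\<lambda>t. iter_exp n (u t)) v1 v2" by blast
  from step[OF this assms(2)] show ?case by (auto simp: iter_exp_Suc)
qed

lemma base:
  fixes t0 :: real
  assumes t0: "t0 \<ge> 0"
    and C2: "C2_derivs {t0..} g0 g0' g0''"
    and tl: "filterlim (\<lambda>t. t * g0' t) at_top at_top"
    and Q: "((\<lambda>t. g0'' t / (g0' t)\<^sup>2) \<longlongrightarrow> 0) at_top"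
    and tm: "\<forall>s t. t0 \<le> s \<and> s \<le> t \<longrightarrow> s * g0' s \<le> t * g0' t"
  shows "\<exists>T1 \<ge> t0 + 1. PP T1 g0 g0' g0''"
proof -
  obtain Ta where Ta: "\<And>t. t \<ge> Ta \<Longrightarrow> t * g0' t \<ge> 1"
    using tl unfolding filterlim_at_top eventually_at_top_linorder by blast
  define T0 where "T0 = max Ta (t0 + 1)"
  have T0: "T0 \<ge> t0 + 1" "T0 > 0" using t0 by (auto simp: T0_def)
  have pos1: "g0' t \<ge> 1 / t" if "t \<ge> T0" for t
  proof -
    have "t \<ge> Ta" using that by (simp add: T0_def)
    then have "t * g0' t \<ge> 1" by (rule Ta)
    moreover have "t > 0" using that T0 by auto
    ultimately show ?thesis by (simp add: field_simps)
  qed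
  have pos: "g0' t > 0" if "t \<ge> T0" for t
  proof -
    have "1 / t > 0" using that T0 by simp
    then show ?thesis using pos1[OF that] by linarith
  qed
  have dat: "(g0 has_real_derivative g0' x) (at x)" if "x \<ge> T0" for x
  proof -
    have d: "(g0 has_real_derivative g0' x) (at x within {t0..})"
      using C2 that T0 unfolding C2_derivs_def by auto
    have "x \<in> interior {t0..}" using that T0 by (auto simp: interior_real_atLeast)
    then have eq: "at x within {t0..} = at x" by (rule at_within_interior)
    show ?thesis using d unfolding eq .
  qed
  have mono: "g0 s \<le> g0 t" if "T0 \<le> s" "s \<le> t" for s t
  proof (rule DERIV_nonneg_imp_nondecreasing[OF that(2)])
    fix x assume x: "s \<le> x" "x \<le> t"
    then have "x \<ge> T0" using that by linarith
    then show "\<exists>y. (g0 has_real_derivative y) (at x) \<and> 0 \<le> y"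
      using dat pos less_imp_le by blast
  qed
  have lnb: "g0 T0 - ln T0 \<le> g0 t - ln t" if "T0 \<le> t" for t
  proof (rule DERIV_nonneg_imp_nondecreasing[OF that, of "\<lambda>x. g0 x - ln x"])
    fix x assume x: "T0 \<le> x" "x \<le> t"
    have "((\<lambda>x. g0 x - ln x) has_real_derivative g0' x - 1 / x) (at x)"
      using dat[OF x(1)] x T0 by (auto intro!: derivative_eq_intros)
    moreover have "0 \<le> g0' x - 1 / x" using pos1[OF x(1)] by simp
    ultimately show "\<exists>y. ((\<lambda>x. g0 x - ln x) has_real_derivative y) (at x) \<and> 0 \<le> y" by blast
  qed
  have lim: "filterlim g0 at_top at_top"
  proof (rule filterlim_at_top_mono)
    show "filterlim (\<lambda>t. (g0 T0 - ln T0) + ln t) at_top at_top"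
      by (rule filterlim_tendsto_add_at_top[OF tendsto_const ln_at_top])
    show "eventually (\<lambda>t. (g0 T0 - ln T0) + ln t \<le> g0 t) at_top"
      using eventually_ge_at_top[of T0]
    proof (rule eventually_mono)
      fix t assume "T0 \<le> t"
      from lnb[OF this] show "(g0 T0 - ln T0) + ln t \<le> g0 t" by linarith
    qed
  qed
  obtain Tb where Tb: "\<And>t. t \<ge> Tb \<Longrightarrow> g0 t \<ge> 1"
    using lim unfolding filterlim_at_top eventually_at_top_linorder by blast
  define T1 where "T1 = max T0 Tb"
  have "C2_derivs {T1..} g0 g0' g0''"
    by (rule C2_subset[OF _ C2]) (use T0 in \<open>auto simp: T1_def\<close>)
  moreover have "\<forall>t\<ge>T1. g0' t > 0 \<and> g0 t > 0"
  proof (intro allI impI conjI)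
    fix t assume "t \<ge> T1"
    then have "t \<ge> T0" "t \<ge> Tb" by (auto simp: T1_def)
    then show "g0' t > 0" "g0 t > 0" using pos Tb[of t] by auto
  qed
  moreover have "\<forall>s t. T1 \<le> s \<and> s \<le> t \<longrightarrow> g0 s \<le> g0 t"
  proof (intro allI impI)
    fix s t assume "T1 \<le> s \<and> s \<le> t"
    then show "g0 s \<le> g0 t" using mono[of s t] by (simp add: T1_def)
  qed
  moreover have "\<forall>s t. T1 \<le> s \<and> s \<le> t \<longrightarrow> s * g0' s \<le> t * g0' t"
  proof (intro allI impI)
    fix s t assume "T1 \<le> s \<and> s \<le> t"
    moreover have "t0 \<le> T1" using T0 by (simp add: T1_def)
    ultimately show "s * g0' s \<le> t * g0' t" using tm by auto
  qed
  ultimately have "PP T1 g0 g0' g0''" using lim tl Q unfolding PP_def by blast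
  moreover have "T1 \<ge> t0 + 1" using T0 by (auto simp: T1_def)
  ultimately show ?thesis by blast
qed

theorem lemma2p11:
  fixes k :: nat and t0 :: real
    and g0 g0' g0'' :: "real \<Rightarrow> real" and f :: "real \<Rightarrow> real"
  assumes "k \<ge> 2" and "t0 \<ge> 0"
    and "C2_derivs {t0..} g0 g0' g0''"
    and "filterlim (\<lambda>t. t * g0' t) at_top at_top"
    and "((\<lambda>t. g0'' t / (g0' t)\<^sup>2) \<longlongrightarrow> 0) at_top"
    and "\<forall>s t. t0 \<le> s \<and> s \<le> t \<longrightarrow> s * g0' s \<le> t * g0' t"
    and "\<forall>s t. t0 \<le> s \<and> s \<le> t \<longrightarrow> g0' t / g0 t \<le> g0' s / g0 s"
    and "\<forall>t\<ge>0. f t \<ge> 0"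
    and "\<exists>f'. (\<forall>t\<ge>0. (f has_real_derivative f' t) (at t within {0..})) \<and> continuous_on {0..} f'"
    and "eventually (\<lambda>t. f t = iter_exp k (g0 t)) at_top"
  shows "\<exists>T p. H1 f T 1 p"
proof -
  note A = assms
  obtain T1 where T1: "T1 \<ge> t0 + 1" "PP T1 g0 g0' g0''"
    using base[OF A(2) A(3) A(4) A(5) A(6)] by blast
  have T1p: "T1 > 0" using T1 A(2) by linarith
  obtain m where k: "k = Suc (Suc m)" using A(1) by (metis add_2_eq_Suc le_Suc_ex)
  obtain v1 v2 where V1: "PP T1 (\<lambda>t. iter_exp m (g0 t)) v1 v2"
    using iterate[OF T1(2) T1p] by blast
  have Qm: "((\<lambda>t. v2 t / (v1 t)\<^sup>2) \<longlongrightarrow> 0) at_top" using V1 unfolding PP_def by blast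
  have "eventually (\<lambda>t. v2 t / (v1 t)\<^sup>2 > -1) at_top"
    using Qm by (rule order_tendstoD) simp
  then obtain T2 where T2: "\<And>t. t \<ge> T2 \<Longrightarrow> v2 t / (v1 t)\<^sup>2 > -1"
    unfolding eventually_at_top_linorder by blast
  obtain T3 where T3: "\<And>t. t \<ge> T3 \<Longrightarrow> f t = iter_exp k (g0 t)"
    using A(10) unfolding eventually_at_top_linorder by blast
  define T where "T = max T1 (max T2 T3)"
  have TT: "T \<ge> T1" "T \<ge> T2" "T \<ge> T3" "T > 0" "T \<ge> t0" using T1 T1p by (auto simp: T_def)
  define G where "G = (\<lambda>t. iter_exp m (g0 t))"
  define H where "H = (\<lambda>t. exp (G t))"
  define w1 where "w1 = (\<lambda>t. exp (G t) * v1 t)"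
  define w2 where "w2 = (\<lambda>t. exp (G t) * ((v1 t)\<^sup>2 + v2 t))"
  have V: "PP T G v1 v2" using PP_mono[OF V1 TT(1)] unfolding G_def .
  have W: "PP T H w1 w2" using step[OF V TT(4)] unfolding H_def w1_def w2_def .
  have X: "PP T (\<lambda>t. exp (H t)) (\<lambda>t. exp (H t) * w1 t) (\<lambda>t. exp (H t) * ((w1 t)\<^sup>2 + w2 t))"
    using step[OF W TT(4)] .
  have fH: "f t = exp (H t)" if "t \<ge> T" for t
    using T3[of t] that TT k by (simp add: H_def G_def iter_exp_Suc)
  have lnf: "ln (f t) = H t" if "t \<ge> T" for t using fH[OF that] by simp
  have v1p: "v1 t > 0" if "t \<ge> T" for t using V that unfolding PP_def by blast
  have w2p: "w2 t > 0" if "t \<ge> T" for t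
  proof -
    have "v2 t / (v1 t)\<^sup>2 > -1" using T2[of t] that TT by linarith
    moreover have "(v1 t)\<^sup>2 > 0" using v1p[OF that] by simp
    ultimately have "v2 t > - (v1 t)\<^sup>2" by (simp add: field_simps)
    then show ?thesis unfolding w2_def by (intro mult_pos_pos) auto
  qed
  have "H1 f T 1 \<infinity>"
    unfolding H1_def
  proof (intro conjI exI)
    show "\<forall>t\<ge>T. f t > 0" using fH by simp
    show "C2_derivs {T..} f (\<lambda>t. exp (H t) * w1 t) (\<lambda>t. exp (H t) * ((w1 t)\<^sup>2 + w2 t))"
      by (rule C2_transform[of _ "\<lambda>t. exp (H t)"]) (use fH X in \<open>auto simp: PP_def\<close>)
    show "C2_derivs {T..} (\<lambda>t. ln (f t)) w1 w2"
      by (rule C2_transform[of _ H]) (use lnf W in \<open>auto simp: PP_def\<close>)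
    show "\<forall>t\<ge>T. w1 t > 0 \<and> w2 t > 0" using W w2p unfolding PP_def by blast
    show "(1::real) = 1 \<and> 0 < (\<infinity>::ereal) \<or> 1 > (1::real) \<and> 0 < (\<infinity>::ereal) \<and> \<infinity> < (\<infinity>::ereal)" by simp
    show "((\<lambda>t. (w1 t)\<^sup>2 / (ln (f t) * w2 t)) \<longlongrightarrow> 1) at_top"
    proof -
      have "((\<lambda>t. inverse (1 + v2 t / (v1 t)\<^sup>2)) \<longlongrightarrow> inverse (1 + 0)) at_top"
        using Qm by (intro tendsto_intros) auto
      moreover have "eventually (\<lambda>t. inverse (1 + v2 t / (v1 t)\<^sup>2) = (w1 t)\<^sup>2 / (ln (f t) * w2 t)) at_top"
        using eventually_ge_at_top[of T]
      proof (rule eventually_mono)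
        fix t assume t: "T \<le> t"
        have "v1 t > 0" using v1p[OF t] .
        then have e1: "inverse (1 + v2 t / (v1 t)\<^sup>2) = (v1 t)\<^sup>2 / ((v1 t)\<^sup>2 + v2 t)"
          by (simp add: field_simps)
        have "exp (G t) * exp (G t) \<noteq> 0" by simp
        have a1: "(w1 t)\<^sup>2 = (exp (G t) * exp (G t)) * (v1 t)\<^sup>2"
          unfolding w1_def by (simp add: power2_eq_square)
        have a2: "ln (f t) * w2 t = (exp (G t) * exp (G t)) * ((v1 t)\<^sup>2 + v2 t)"
          unfolding lnf[OF t] w2_def H_def by simp
        have e2: "(w1 t)\<^sup>2 / (ln (f t) * w2 t) = (v1 t)\<^sup>2 / ((v1 t)\<^sup>2 + v2 t)"
          unfolding a1 a2 by (rule nonzero_mult_divide_mult_cancel_left) simp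
        show "inverse (1 + v2 t / (v1 t)\<^sup>2) = (w1 t)\<^sup>2 / (ln (f t) * w2 t)"
          using e1 e2 by simp
      qed
      ultimately show ?thesis using tendsto_cong by fastforce
    qed
    show "((\<lambda>t. ereal (t * w1 t / ln (f t))) \<longlongrightarrow> \<infinity>) at_top"
      unfolding tendsto_PInfty_eq_at_top
    proof -
      have "filterlim (\<lambda>t. t * v1 t) at_top at_top" using V unfolding PP_def by blast
      moreover have "eventually (\<lambda>t. t * v1 t = t * w1 t / ln (f t)) at_top"
        using eventually_ge_at_top[of T]
        by (rule eventually_mono) (simp add: lnf w1_def H_def)
      ultimately show "filterlim (\<lambda>t. t * w1 t / ln (f t)) at_top at_top"
        using filterlim_cong by fastforce
    qed
    show "1 = (1::real) \<longrightarrow>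
        (\<forall>s t. T \<le> s \<and> s \<le> t \<longrightarrow> s * w1 s / ln (f s) \<le> t * w1 t / ln (f t)) \<and>
        (\<exists>m::nat. m \<ge> 1 \<and>
          (\<exists>h h1 h2. C2_derivs {T..} h h1 h2 \<and>
             (\<forall>t\<ge>T. f t = iter_exp m (h t)) \<and>
             (\<forall>s t. T \<le> s \<and> s \<le> t \<longrightarrow> h1 t / h t \<le> h1 s / h s)))"
    proof (intro impI conjI)
      show "\<forall>s t. T \<le> s \<and> s \<le> t \<longrightarrow> s * w1 s / ln (f s) \<le> t * w1 t / ln (f t)"
      proof (intro allI impI)
        fix s t assume st: "T \<le> s \<and> s \<le> t"
        have "s * v1 s \<le> t * v1 t" using V st unfolding PP_def by blast
        moreover have "s * w1 s / ln (f s) = s * v1 s" using st by (simp add: lnf w1_def H_def)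
        moreover have "t * w1 t / ln (f t) = t * v1 t" using st by (simp add: lnf w1_def H_def)
        ultimately show "s * w1 s / ln (f s) \<le> t * w1 t / ln (f t)" by simp
      qed
      have c: "C2_derivs {T..} g0 g0' g0''" using C2_subset[OF _ A(3)] TT by auto
      have e: "\<forall>t\<ge>T. f t = iter_exp k (g0 t)" using T3 TT by auto
      have r: "\<forall>s t. T \<le> s \<and> s \<le> t \<longrightarrow> g0' t / g0 t \<le> g0' s / g0 s" using A(7) TT by auto
      show "\<exists>m::nat. m \<ge> 1 \<and>
          (\<exists>h h1 h2. C2_derivs {T..} h h1 h2 \<and>
             (\<forall>t\<ge>T. f t = iter_exp m (h t)) \<and>
             (\<forall>s t. T \<le> s \<and> s \<le> t \<longrightarrow> h1 t / h t \<le> h1 s / h s))"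
        using c e r A(1) by (intro exI[of _ k]) auto
    qed
  qed
  then show ?thesis by blast
qed

end
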